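(* Let $G=(V,E)$ be a connected graph with $n$ vertices, $\tau$ a set of types, $f:\tau\to\mathbb{Q}_{\ge1}$ a fitness function, $\alpha\in\tau^+(f)$, and $D\in\mathcal D(G,\tau)$. Then $\pi_\alpha(G,\tau,f,D)\ge 1/n$.
   Context: $\tau^+(f)=\{i\in\tau: f(i)=\max_{j\in\tau}f(j)\}$. For $G=(V,E)$, $N(v)$ is the neighbourhood of $v$. $\Omega$ is the set of functions $V\to\tau$; for $S\in\Omega$, $S|_{v\to w}$ equals $S$ except $w$ gets type $S(v)$. The Moran process $M(G,\tau,f,M_0)$: Markov chain on $\Omega$ from $M_0$; given $M_t$, choose $v$ with probability $f(M_t(v))/\sum_uf(M_t(u))$, then $w\in N(v)$ uniformly, set $M_{t+1}=M_t|_{v\to w}$. $\pi_j(G,\tau,f,M_0)$ is the probability that eventually all vertices have type $j$, and $\pi_j(G,\tau,f,D)=\sum_{M_0}\Pr_D(M_0)\pi_j(G,\tau,f,M_0)$. With $k=|\tau|$, $V[k]$ is the set of $k$-tuples of distinct vertices, $\tau[k]$ the set of $k$-tuples of distinct types, $\Omega(\mathbf u,\boldsymbol\gamma)$ the set of states mapping the $i$-th entry of $\mathbf u$ to the $i$-th entry of $\boldsymbol\gamma$ for all $i$. $\mathcal D(G,\tau)$ is the set of distributions $D$ on $\Omega$ for which there are distributions $D_{\mathbf u,\boldsymbol\gamma}$ on $\Omega(\mathbf u,\boldsymbol\gamma)$ with $\Pr_D(S)=\frac{1}{|V[k]\times\tau[k]|}\sum_{(\mathbf u,\boldsymbol\gamma)\in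 V[k]\times\tau[k]}\Pr_{D_{\mathbf u,\boldsymbol\gamma}}(S)$ for all $S$. *)

theory Defs
  imports "HOL-Probability.Probability"
begin

definition graph :: "'v set \<Rightarrow> ('v \<Rightarrow> 'v \<Rightarrow> bool) \<Rightarrow> bool" where
  "graph V E \<longleftrightarrow> finite V \<and> (\<forall>u v. E u v \<longrightarrow> u \<in> V \<and> v \<in> V \<and> E v u \<and> u \<noteq> v)"

definition connected_graph :: "'v set \<Rightarrow> ('v \<Rightarrow> 'v \<Rightarrow> bool) \<Rightarrow> bool" where
  "connected_graph V E \<longleftrightarrow> graph V E \<and> V \<noteq> {} \<and>
     (\<forall>u\<in>V. \<forall>v\<in>V. (\<lambda>x y. x \<in> V \<and> y \<in> V \<and> E x y)\<^sup>*\<^sup>* u v)"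

definition nbhd :: "'v set \<Rightarrow> ('v \<Rightarrow> 'v \<Rightarrow> bool) \<Rightarrow> 'v \<Rightarrow> 'v set" where
  "nbhd V E v = {w \<in> V. E v w}"

definition fittest :: "'t set \<Rightarrow> ('t \<Rightarrow> real) \<Rightarrow> 't set" where
  "fittest \<tau> f = {i \<in> \<tau>. \<forall>j\<in>\<tau>. f j \<le> f i}"

definition states :: "'v set \<Rightarrow> 't set \<Rightarrow> ('v \<Rightarrow> 't) set" where
  "states V \<tau> = V \<rightarrow>\<^sub>E \<tau>"

text \<open>A vertex v is chosen with
  probability f(S v) / (sum of fitnesses), then a neighbour w of v uniformly,
  and S' = S with w receiving type S v.  (Convention: if v has no neighbours,
  which only happens for the one-vertex connected graph, the state is unchanged.)\<close>
definition moran_trans ::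
  "'v set \<Rightarrow> ('v \<Rightarrow> 'v \<Rightarrow> bool) \<Rightarrow> ('t \<Rightarrow> real) \<Rightarrow> ('v \<Rightarrow> 't) \<Rightarrow> ('v \<Rightarrow> 't) \<Rightarrow> real" where
  "moran_trans V E f S S' =
     (\<Sum>v\<in>V. f (S v) / (\<Sum>u\<in>V. f (S u)) *
        (if nbhd V E v = {} then (if S' = S then 1 else 0)
         else (\<Sum>w\<in>nbhd V E v. (if S' = S(w := S v) then 1 else 0) / real (card (nbhd V E v)))))"

fun moran_pt ::
  "'v set \<Rightarrow> ('v \<Rightarrow> 'v \<Rightarrow> bool) \<Rightarrow> 't set \<Rightarrow> ('t \<Rightarrow> real) \<Rightarrow> nat \<Rightarrow> ('v \<Rightarrow> 't) \<Rightarrow> ('v \<Rightarrow> 't) \<Rightarrow> real" where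
  "moran_pt V E \<tau> f 0 S0 S = (if S = S0 then 1 else 0)"
| "moran_pt V E \<tau> f (Suc t) S0 S =
     (\<Sum>R\<in>states V \<tau>. moran_pt V E \<tau> f t S0 R * moran_trans V E f R S)"

text \<open>Fixation probability of type j from initial state M0: the probability that
  eventually all vertices have type j. Since the monochromatic state is absorbing,
  this is the limit of Pr(M_t is monochromatic j) as t \<rightarrow> \<infinity>.\<close>
definition fix_prob ::
  "'v set \<Rightarrow> ('v \<Rightarrow> 'v \<Rightarrow> bool) \<Rightarrow> 't set \<Rightarrow> ('t \<Rightarrow> real) \<Rightarrow> 't \<Rightarrow> ('v \<Rightarrow> 't) \<Rightarrow> real" where
  "fix_prob V E \<tau> f j M0 = lim (\<lambda>t. moran_pt V E \<tau> f t M0 (\<lambda>v\<in>V. j))"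

definition fix_prob_dist ::
  "'v set \<Rightarrow> ('v \<Rightarrow> 'v \<Rightarrow> bool) \<Rightarrow> 't set \<Rightarrow> ('t \<Rightarrow> real) \<Rightarrow> 't \<Rightarrow> ('v \<Rightarrow> 't) pmf \<Rightarrow> real" where
  "fix_prob_dist V E \<tau> f j D = (\<Sum>M0\<in>states V \<tau>. pmf D M0 * fix_prob V E \<tau> f j M0)"

definition dtuples :: "'a set \<Rightarrow> nat \<Rightarrow> 'a list set" where
  "dtuples A k = {xs. length xs = k \<and> distinct xs \<and> set xs \<subseteq> A}"

definition states_fixed :: "'v set \<Rightarrow> 't set \<Rightarrow> 'v list \<Rightarrow> 't list \<Rightarrow> ('v \<Rightarrow> 't) set" where
  "states_fixed V \<tau> u \<gamma> = {S \<in> states V \<tau>. \<forall>i<length u. S (u ! i) = \<gamma> ! i}"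

definition init_dists :: "'v set \<Rightarrow> 't set \<Rightarrow> ('v \<Rightarrow> 't) pmf set" where
  "init_dists V \<tau> = {D. \<exists>Df :: 'v list \<Rightarrow> 't list \<Rightarrow> ('v \<Rightarrow> 't) pmf.
      (\<forall>u\<in>dtuples V (card \<tau>). \<forall>\<gamma>\<in>dtuples \<tau> (card \<tau>). set_pmf (Df u \<gamma>) \<subseteq> states_fixed V \<tau> u \<gamma>) \<and>
      (\<forall>S. pmf D S = (1 / real (card (dtuples V (card \<tau>) \<times> dtuples \<tau> (card \<tau>)))) *
          (\<Sum>(u, \<gamma>)\<in>dtuples V (card \<tau>) \<times> dtuples \<tau> (card \<tau>). pmf (Df u \<gamma>) S))}"

end

theory Submission
  imports Defs
begin


locale moran =
  fixes V :: "'v set" and E :: "'v \<Rightarrow> 'v \<Rightarrow> bool" and \<tau> :: "'t set"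
    and f :: "'t \<Rightarrow> real" and \<alpha> :: 't
  assumes conn: "connected_graph V E" and fin_tau: "finite \<tau>"
    and fge1: "\<forall>i\<in>\<tau>. f i \<ge> 1" and fit: "\<alpha> \<in> fittest \<tau> f"
begin

lemma finV: "finite V" using conn by (simp add: connected_graph_def graph_def)
lemma Vne: "V \<noteq> {}" using conn by (simp add: connected_graph_def)
lemma edge: "E u v \<Longrightarrow> u \<in> V \<and> v \<in> V \<and> E v u \<and> u \<noteq> v"
  using conn by (simp add: connected_graph_def graph_def)
lemma alpha_tau: "\<alpha> \<in> \<tau>" using fit by (simp add: fittest_def)
lemma alpha_max: "i \<in> \<tau> \<Longrightarrow> f i \<le> f \<alpha>" using fit by (simp add: fittest_def)
lemma f1: "i \<in> \<tau> \<Longrightarrow> f i \<ge> 1" using fge1 by auto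

abbreviation Om where "Om \<equiv> states V \<tau>"
lemma finOm: "finite Om" unfolding states_def using finV fin_tau by (simp add: finite_PiE)
lemma Om_val: "S \<in> Om \<Longrightarrow> v \<in> V \<Longrightarrow> S v \<in> \<tau>" unfolding states_def by auto
lemma Om_upd: "S \<in> Om \<Longrightarrow> w \<in> V \<Longrightarrow> x \<in> \<tau> \<Longrightarrow> S(w := x) \<in> Om"
  unfolding states_def by (auto simp: PiE_def extensional_def)
lemma nb_sub: "nbhd V E v \<subseteq> V" by (auto simp: nbhd_def)
lemma fin_nb: "finite (nbhd V E v)" using finite_subset[OF nb_sub finV] .
lemma nb_mem: "w \<in> nbhd V E v \<longleftrightarrow> w \<in> V \<and> E v w" by (simp add: nbhd_def)

definition F where "F S = (\<Sum>u\<in>V. f (S u))"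

lemma F_pos: "S \<in> Om \<Longrightarrow> F S > 0"
proof -
  assume S: "S \<in> Om"
  have "F S \<ge> (\<Sum>u\<in>V. 1)" unfolding F_def
    by (rule sum_mono) (use S Om_val f1 in auto)
  moreover have "(\<Sum>u\<in>V. (1::real)) > 0" using finV Vne by (simp add: card_gt_0_iff)
  ultimately show ?thesis by linarith
qed

lemma F_le: "S \<in> Om \<Longrightarrow> F S \<le> real (card V) * f \<alpha>"
proof -
  assume S: "S \<in> Om"
  have "F S \<le> (\<Sum>u\<in>V. f \<alpha>)" unfolding F_def
    by (rule sum_mono) (use S Om_val alpha_max in auto)
  then show ?thesis by simp
qed

definition Pop :: "(('v \<Rightarrow> 't) \<Rightarrow> real) \<Rightarrow> ('v \<Rightarrow> 't) \<Rightarrow> real" where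
  "Pop g S = (\<Sum>v\<in>V. f (S v) / F S * (if nbhd V E v = {} then g S
      else (\<Sum>w\<in>nbhd V E v. g (S(w := S v))) / real (card (nbhd V E v))))"

definition Q where "Q t g = (Pop ^^ t) g"

lemma Pop_mono:
  assumes "\<And>T. T \<in> Om \<Longrightarrow> g T \<le> h T" "S \<in> Om"
  shows "Pop g S \<le> Pop h S"
  unfolding Pop_def
proof (rule sum_mono)
  fix v assume v: "v \<in> V"
  have c: "f (S v) / F S \<ge> 0" using F_pos[OF assms(2)] f1[OF Om_val[OF assms(2) v]] by simp
  have "(if nbhd V E v = {} then g S else (\<Sum>w\<in>nbhd V E v. g (S(w := S v))) / real (card (nbhd V E v)))
     \<le> (if nbhd V E v = {} then h S else (\<Sum>w\<in>nbhd V E v. h (S(w := S v))) / real (card (nbhd V E v)))"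
  proof (cases "nbhd V E v = {}")
    case True then show ?thesis using assms by simp
  next
    case False
    have "(\<Sum>w\<in>nbhd V E v. g (S(w := S v))) \<le> (\<Sum>w\<in>nbhd V E v. h (S(w := S v)))"
      by (rule sum_mono) (use assms Om_upd Om_val v nb_sub in blast)
    then show ?thesis using False by (simp add: divide_right_mono)
  qed
  then show "f (S v) / F S * (if nbhd V E v = {} then g S else (\<Sum>w\<in>nbhd V E v. g (S(w := S v))) / real (card (nbhd V E v)))
     \<le> f (S v) / F S * (if nbhd V E v = {} then h S else (\<Sum>w\<in>nbhd V E v. h (S(w := S v))) / real (card (nbhd V E v)))"
    using c by (rule mult_left_mono)
qed

lemma Pop_const: "S \<in> Om \<Longrightarrow> Pop (\<lambda>_. c) S = c"
proof -
  assume S: "S \<in> Om"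
  have "Pop (\<lambda>_. c) S = (\<Sum>v\<in>V. f (S v) / F S * c)" unfolding Pop_def
    by (rule sum.cong) (use fin_nb in \<open>auto simp: card_gt_0_iff\<close>)
  also have "\<dots> = (\<Sum>v\<in>V. f (S v)) / F S * c" by (simp add: sum_divide_distrib sum_distrib_right)
  also have "\<dots> = c" using F_pos[OF S] by (simp add: F_def)
  finally show ?thesis .
qed

lemma Pop_diff: "Pop (\<lambda>T. g T - h T) S = Pop g S - Pop h S"
  unfolding Pop_def sum_subtractf[symmetric]
  by (rule sum.cong) (auto simp: sum_subtractf diff_divide_distrib right_diff_distrib)

end


context moran begin

lemma Om_upd2[simp]: "S \<in> Om \<Longrightarrow> v \<in> V \<Longrightarrow> w \<in> nbhd V E v \<Longrightarrow> S(w := S v) \<in> Om"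
  by (meson Om_upd Om_val nb_sub subsetD)

lemma Pop_cmult: "Pop (\<lambda>T. c * g T) S = c * Pop g S"
  unfolding Pop_def sum_distrib_left
  by (rule sum.cong) (auto simp: sum_distrib_left[symmetric])

lemma Pop_cong: "(\<And>T. T \<in> Om \<Longrightarrow> g T = h T) \<Longrightarrow> S \<in> Om \<Longrightarrow> Pop g S = Pop h S"
proof -
  assume a: "\<And>T. T \<in> Om \<Longrightarrow> g T = h T" and S: "S \<in> Om"
  have "Pop g S \<le> Pop h S" by (rule Pop_mono) (use a S in auto)
  moreover have "Pop h S \<le> Pop g S" by (rule Pop_mono) (use a S in auto)
  ultimately show ?thesis by simp
qed

lemma Q_Suc: "Q (Suc t) g = Pop (Q t g)" by (simp add: Q_def)
lemma Q_Suc': "Q (Suc t) g = Q t (Pop g)" unfolding Q_def by (simp add: funpow_Suc_right del: funpow.simps)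
lemma Q_0: "Q 0 g = g" by (simp add: Q_def)
lemma Q_add: "Q (s + t) g = Q s (Q t g)" by (simp add: Q_def funpow_add)

lemma Q_mono: "(\<And>T. T \<in> Om \<Longrightarrow> g T \<le> h T) \<Longrightarrow> S \<in> Om \<Longrightarrow> Q t g S \<le> Q t h S"
  by (induction t arbitrary: S) (auto simp: Q_0 Q_Suc intro!: Pop_mono)

lemma Q_const: "S \<in> Om \<Longrightarrow> Q t (\<lambda>_. c) S = c"
proof (induction t arbitrary: S)
  case 0 then show ?case by (simp add: Q_0)
next
  case (Suc t)
  have "Q (Suc t) (\<lambda>_. c) S = Pop (\<lambda>_. c) S" unfolding Q_Suc by (rule Pop_cong) (use Suc in auto)
  then show ?case using Pop_const Suc by simp
qed

lemma Q_diff: "Q t (\<lambda>T. g T - h T) S = Q t g S - Q t h S"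
proof (induction t arbitrary: S)
  case 0 then show ?case by (simp add: Q_0)
next
  case (Suc t)
  have "Q (Suc t) (\<lambda>T. g T - h T) = Pop (\<lambda>T. Q t g T - Q t h T)"
    unfolding Q_Suc using Suc by presburger
  then show ?case by (simp add: Pop_diff Q_Suc)
qed

lemma Q_cmult: "Q t (\<lambda>T. c * g T) S = c * Q t g S"
proof (induction t arbitrary: S)
  case 0 then show ?case by (simp add: Q_0)
next
  case (Suc t)
  have "Q (Suc t) (\<lambda>T. c * g T) = Pop (\<lambda>T. c * Q t g T)"
    unfolding Q_Suc using Suc by presburger
  then show ?case by (simp add: Pop_cmult Q_Suc)
qed

lemma Q_sub: "(\<And>T. T \<in> Om \<Longrightarrow> g T \<le> Pop g T) \<Longrightarrow> S \<in> Om \<Longrightarrow> g S \<le> Q t g S"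
proof (induction t arbitrary: S)
  case 0 then show ?case by (simp add: Q_0)
next
  case (Suc t)
  have "g S \<le> Q t g S" using Suc by blast
  also have "\<dots> \<le> Q t (Pop g) S" by (rule Q_mono) (use Suc in auto)
  finally show ?case by (simp add: Q_Suc')
qed

lemma Q_incr: "(\<And>T. T \<in> Om \<Longrightarrow> g T \<le> Pop g T) \<Longrightarrow> S \<in> Om \<Longrightarrow> incseq (\<lambda>t. Q t g S)"
proof (rule incseq_SucI)
  fix t assume g: "\<And>T. T \<in> Om \<Longrightarrow> g T \<le> Pop g T" and S: "S \<in> Om"
  show "Q t g S \<le> Q (Suc t) g S" unfolding Q_Suc' by (rule Q_mono) (use g S in auto)
qed

lemma delta_sum: "X \<in> Om \<Longrightarrow> (\<Sum>S\<in>Om. (if S = X then 1 else 0) * g S) = (g X :: real)"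
proof -
  assume X: "X \<in> Om"
  have "(\<lambda>S. (if S = X then 1 else 0) * g S) = (\<lambda>S. if S = X then g X else 0)" by auto
  then show ?thesis using X finOm by (simp only:) (simp add: sum.delta)
qed

lemma trans_Pop:
  assumes R: "R \<in> Om"
  shows "(\<Sum>S\<in>Om. moran_trans V E f R S * g S) = Pop g R"
proof -
  have "(\<Sum>S\<in>Om. moran_trans V E f R S * g S)
     = (\<Sum>v\<in>V. \<Sum>S\<in>Om. f (R v) / F R * ((if nbhd V E v = {} then (if S = R then 1 else 0)
         else (\<Sum>w\<in>nbhd V E v. (if S = R(w := R v) then 1 else 0) / real (card (nbhd V E v)))) * g S))"
    unfolding moran_trans_def F_def sum_distrib_right
    by (subst sum.swap) (simp add: mult.assoc)
  also have "\<dots> = Pop g R" unfolding Pop_def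
  proof (rule sum.cong[OF refl])
    fix v assume v: "v \<in> V"
    show "(\<Sum>S\<in>Om. f (R v) / F R * ((if nbhd V E v = {} then (if S = R then 1 else 0)
         else (\<Sum>w\<in>nbhd V E v. (if S = R(w := R v) then 1 else 0) / real (card (nbhd V E v)))) * g S))
      = f (R v) / F R * (if nbhd V E v = {} then g R
      else (\<Sum>w\<in>nbhd V E v. g (R(w := R v))) / real (card (nbhd V E v)))"
    proof (cases "nbhd V E v = {}")
      case True then show ?thesis
        using delta_sum[OF R, of g] by (simp add: sum_divide_distrib[symmetric] sum_distrib_left[symmetric])
    next
      case False
      have "(\<Sum>S\<in>Om. (\<Sum>w\<in>nbhd V E v. (if S = R(w := R v) then 1 else 0) / real (card (nbhd V E v))) * g S)
        = (\<Sum>w\<in>nbhd V E v. (\<Sum>S\<in>Om. (if S = R(w := R v) then 1 else 0) * g S) / real (card (nbhd V E v)))"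
        unfolding sum_distrib_right sum_divide_distrib by (subst sum.swap) (simp add: algebra_simps)
      also have "\<dots> = (\<Sum>w\<in>nbhd V E v. g (R(w := R v)) / real (card (nbhd V E v)))"
        by (rule sum.cong[OF refl], subst delta_sum) (use R v in auto)
      finally have eq: "(\<Sum>S\<in>Om. (\<Sum>w\<in>nbhd V E v. (if S = R(w := R v) then 1 else 0) / real (card (nbhd V E v))) * g S)
        = (\<Sum>w\<in>nbhd V E v. g (R(w := R v))) / real (card (nbhd V E v))" by (simp add: sum_divide_distrib)
      show ?thesis using False
        by (simp only: if_False sum_distrib_left[symmetric] eq)
    qed
  qed
  finally show ?thesis .
qed

lemma pt_Q: "S0 \<in> Om \<Longrightarrow> (\<Sum>S\<in>Om. moran_pt V E \<tau> f t S0 S * g S) = Q t g S0"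
proof (induction t arbitrary: g)
  case 0 then show ?case using delta_sum[of S0 g] by (simp add: Q_0)
next
  case (Suc t)
  have "(\<Sum>S\<in>Om. moran_pt V E \<tau> f (Suc t) S0 S * g S)
      = (\<Sum>R\<in>Om. moran_pt V E \<tau> f t S0 R * (\<Sum>S\<in>Om. moran_trans V E f R S * g S))"
    by (simp add: sum_distrib_right sum_distrib_left mult.assoc) (rule sum.swap)
  also have "\<dots> = (\<Sum>R\<in>Om. moran_pt V E \<tau> f t S0 R * Pop g R)"
    by (rule sum.cong) (auto simp: trans_Pop)
  also have "\<dots> = Q t (Pop g) S0" using Suc by blast
  finally show ?case by (simp add: Q_Suc')
qed

end


context moran begin

definition allA where "allA = (\<lambda>v\<in>V. \<alpha>)"
definition ind_all :: "('v \<Rightarrow> 't) \<Rightarrow> real" where "ind_all S = (if S = allA then 1 else 0)"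
definition ind_none :: "('v \<Rightarrow> 't) \<Rightarrow> real" where "ind_none S = (if \<alpha> \<notin> S ` V then 1 else 0)"
definition mixed :: "('v \<Rightarrow> 't) \<Rightarrow> real" where "mixed S = 1 - ind_all S - ind_none S"
definition wt where "wt v = 1 / real (max 1 (card (nbhd V E v)))"
definition Phi where "Phi S = (\<Sum>v\<in>V. if S v = \<alpha> then wt v else 0)"
definition Z where "Z = (\<Sum>v\<in>V. wt v)"

lemma allA_Om: "allA \<in> Om" unfolding allA_def states_def using alpha_tau by auto

lemma Om_eqI: "S \<in> Om \<Longrightarrow> T \<in> Om \<Longrightarrow> (\<And>v. v \<in> V \<Longrightarrow> S v = T v) \<Longrightarrow> S = T"
  unfolding states_def by (rule PiE_ext) auto

lemma allA_eq: "S \<in> Om \<Longrightarrow> (\<forall>v\<in>V. S v = \<alpha>) \<Longrightarrow> S = allA"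
  by (rule Om_eqI[OF _ allA_Om]) (auto simp: allA_def)

lemma Pop_local:
  assumes "\<And>v w. v \<in> V \<Longrightarrow> w \<in> nbhd V E v \<Longrightarrow> g (S(w := S v)) = h (S(w := S v))" "g S = h S"
  shows "Pop g S = Pop h S"
  unfolding Pop_def by (rule sum.cong[OF refl]) (use assms in \<open>auto intro!: sum.cong\<close>)

lemma Pop_nonneg: "(\<And>T. T \<in> Om \<Longrightarrow> g T \<ge> 0) \<Longrightarrow> S \<in> Om \<Longrightarrow> Pop g S \<ge> 0"
  using Pop_mono[of "\<lambda>_. 0" g S] Pop_const[of S 0] by auto

lemma Q_nonneg: "(\<And>T. T \<in> Om \<Longrightarrow> g T \<ge> 0) \<Longrightarrow> S \<in> Om \<Longrightarrow> Q t g S \<ge> 0"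
  using Q_mono[of "\<lambda>_. 0" g S t] Q_const[of S t 0] by auto

lemma sub_all: "T \<in> Om \<Longrightarrow> ind_all T \<le> Pop ind_all T"
proof (cases "T = allA")
  case True
  assume T: "T \<in> Om"
  have "Pop ind_all T = Pop (\<lambda>_. 1) T"
  proof (rule Pop_local)
    fix v w assume v: "v \<in> V" and w: "w \<in> nbhd V E v"
    have "T(w := T v) = T" using True v w by (auto simp: allA_def fun_eq_iff nb_mem)
    then show "ind_all (T(w := T v)) = 1" using True by (simp add: ind_all_def)
  qed (use True in \<open>simp add: ind_all_def\<close>)
  then show ?thesis using Pop_const[OF T] True by (simp add: ind_all_def)
next
  case False
  assume T: "T \<in> Om"
  then show ?thesis using Pop_nonneg[of ind_all T] False by (simp add: ind_all_def)
qed

lemma sub_none: "T \<in> Om \<Longrightarrow> ind_none T \<le> Pop ind_none T"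
proof (cases "\<alpha> \<notin> T ` V")
  case True
  assume T: "T \<in> Om"
  have "Pop ind_none T = Pop (\<lambda>_. 1) T"
  proof (rule Pop_local)
    fix v w assume v: "v \<in> V" and w: "w \<in> nbhd V E v"
    have "\<alpha> \<notin> (T(w := T v)) ` V" using True v by auto
    then show "ind_none (T(w := T v)) = 1" by (simp add: ind_none_def)
  qed (use True in \<open>simp add: ind_none_def\<close>)
  then show ?thesis using Pop_const[OF T] True by (simp add: ind_none_def)
next
  case False
  assume T: "T \<in> Om"
  then show ?thesis using Pop_nonneg[of ind_none T] False by (simp add: ind_none_def)
qed

lemma wt_pos: "wt v > 0" by (simp add: wt_def)

lemma Z_pos: "Z > 0" unfolding Z_def using finV Vne wt_pos by (simp add: sum_pos)

lemma Phi_upd: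
  assumes w: "w \<in> V"
  shows "Phi (S(w := x)) = Phi S - (if S w = \<alpha> then wt w else 0) + (if x = \<alpha> then wt w else 0)"
proof -
  have "Phi (S(w := x)) = (if x = \<alpha> then wt w else 0) + (\<Sum>v\<in>V - {w}. if S v = \<alpha> then wt v else 0)"
    unfolding Phi_def by (subst sum.remove[OF finV w]) (auto intro!: sum.cong)
  moreover have "Phi S = (if S w = \<alpha> then wt w else 0) + (\<Sum>v\<in>V - {w}. if S v = \<alpha> then wt v else 0)"
    unfolding Phi_def by (subst sum.remove[OF finV w]) auto
  ultimately show ?thesis by simp
qed

lemma nb_swap: "(\<Sum>v\<in>V. \<Sum>w\<in>nbhd V E v. h v w) = (\<Sum>v\<in>V. \<Sum>w\<in>nbhd V E v. h w v)"
proof -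
  have "(\<Sum>v\<in>V. \<Sum>w\<in>nbhd V E v. h v w) = (\<Sum>w\<in>V. \<Sum>v\<in>{v. v \<in> V \<and> E v w}. h v w)"
    unfolding nbhd_def using sum.swap_restrict[OF finV finV, of h E] by simp
  also have "\<dots> = (\<Sum>w\<in>V. \<Sum>v\<in>nbhd V E w. h v w)"
    by (rule sum.cong[OF refl], rule sum.cong) (auto simp: nbhd_def dest: edge)
  finally show ?thesis .
qed

end


context moran begin

lemma card_nb_pos: "w \<in> nbhd V E v \<Longrightarrow> card (nbhd V E v) \<ge> 1"
  using fin_nb by (metis One_nat_def Suc_leI card_gt_0_iff empty_iff)

lemma nb_sym: "w \<in> nbhd V E v \<Longrightarrow> v \<in> nbhd V E w"
  by (auto simp: nb_mem dest: edge)

lemma wt_nb: "w \<in> nbhd V E v \<Longrightarrow> wt v = 1 / real (card (nbhd V E v))"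
  using card_nb_pos[of w v] by (simp add: wt_def max_def)

lemma sub_Phi:
  assumes S: "S \<in> Om"
  shows "Phi S \<le> Pop Phi S"
proof -
  define d where "d v = real (card (nbhd V E v))" for v
  define P where "P v w = (if S v = \<alpha> \<and> S w \<noteq> \<alpha> then f \<alpha> * wt w / d v else 0)" for v w
  define Nn where "Nn v w = (if S v \<noteq> \<alpha> \<and> S w = \<alpha> then f (S v) * wt w / d v else 0)" for v w
  have 1: "Pop Phi S - Phi S = Pop (\<lambda>T. Phi T - Phi S) S"
    using Pop_diff[of Phi "\<lambda>_. Phi S" S] Pop_const[OF S] by simp
  have 2: "Pop (\<lambda>T. Phi T - Phi S) S
      = (\<Sum>v\<in>V. f (S v) / F S * ((\<Sum>w\<in>nbhd V E v. Phi (S(w := S v)) - Phi S) / d v))"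
    unfolding Pop_def d_def by (rule sum.cong) auto
  also have "\<dots> = (\<Sum>v\<in>V. \<Sum>w\<in>nbhd V E v. f (S v) * (Phi (S(w := S v)) - Phi S) / d v) / F S"
    by (simp add: sum_divide_distrib sum_distrib_left mult.commute)
  also have "\<dots> = (\<Sum>v\<in>V. \<Sum>w\<in>nbhd V E v. P v w - Nn v w) / F S"
  proof -
    have "f (S v) * (Phi (S(w := S v)) - Phi S) / d v = P v w - Nn v w"
      if v: "v \<in> V" and w: "w \<in> nbhd V E v" for v w
      using Phi_upd[of w S "S v"] w by (auto simp: nb_mem P_def Nn_def)
    then show ?thesis by (auto intro!: sum.cong)
  qed
  also have "\<dots> = (\<Sum>v\<in>V. \<Sum>w\<in>nbhd V E v. P v w - Nn w v) / F S"
    by (simp add: sum_subtractf nb_swap[of Nn])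
  finally have eq: "Pop (\<lambda>T. Phi T - Phi S) S = (\<Sum>v\<in>V. \<Sum>w\<in>nbhd V E v. P v w - Nn w v) / F S" .
  have "(\<Sum>v\<in>V. \<Sum>w\<in>nbhd V E v. P v w - Nn w v) \<ge> 0"
  proof (intro sum_nonneg)
    fix v w assume v: "v \<in> V" and w: "w \<in> nbhd V E v"
    have vw: "v \<in> nbhd V E w" using nb_sym[OF w] .
    have dv: "d v \<ge> 1" and dw: "d w \<ge> 1" using card_nb_pos[OF w] card_nb_pos[OF vw] by (auto simp: d_def)
    have wtv: "wt v = 1 / d v" and wtw: "wt w = 1 / d w" using wt_nb[OF w] wt_nb[OF vw] by (auto simp: d_def)
    have wV: "w \<in> V" using w by (simp add: nb_mem)
    show "P v w - Nn w v \<ge> 0"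
    proof (cases "S v = \<alpha> \<and> S w \<noteq> \<alpha>")
      case True
      have fw: "f (S w) \<le> f \<alpha>" using alpha_max Om_val[OF S wV] by simp
      have "P v w - Nn w v = (f \<alpha> - f (S w)) / (d v * d w)"
        using True dv dw by (simp add: P_def Nn_def wtv wtw field_simps)
      also have "\<dots> \<ge> 0" using fw dv dw by simp
      finally show ?thesis .
    qed (auto simp: P_def Nn_def)
  qed
  then have "Pop (\<lambda>T. Phi T - Phi S) S \<ge> 0" unfolding eq using F_pos[OF S] by simp
  then show ?thesis using 1 by simp
qed

end


context moran begin

lemma path_edge:
  assumes S: "S \<in> Om" and x: "x \<in> V" "S x = \<alpha>" and y: "y \<in> V" "S y \<noteq> \<alpha>"
  shows "\<exists>v w. v \<in> V \<and> w \<in> nbhd V E v \<and> S v = \<alpha> \<and> S w \<noteq> \<alpha>"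
proof -
  have r: "(\<lambda>x y. x \<in> V \<and> y \<in> V \<and> E x y)\<^sup>*\<^sup>* x y" using conn x y by (simp add: connected_graph_def)
  have "S z \<noteq> \<alpha> \<Longrightarrow> \<exists>v w. v \<in> V \<and> w \<in> nbhd V E v \<and> S v = \<alpha> \<and> S w \<noteq> \<alpha>"
    if "(\<lambda>x y. x \<in> V \<and> y \<in> V \<and> E x y)\<^sup>*\<^sup>* x z" for z
    using that
  proof (induction rule: rtranclp_induct)
    case base then show ?case using x by simp
  next
    case (step y' z)
    show ?case
    proof (cases "S y' = \<alpha>")
      case True then show ?thesis using step by (auto simp: nb_mem)
    next
      case False then show ?thesis using step by blast
    qed
  qed
  then show ?thesis using r y by blast
qed

lemma Pop_single:
  assumes g: "\<And>T. T \<in> Om \<Longrightarrow> g T \<ge> 0" and S: "S \<in> Om" and v: "v \<in> V" and w: "w \<in> nbhd V E v"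
  shows "Pop g S \<ge> f (S v) / F S * g (S(w := S v)) / real (card (nbhd V E v))"
proof -
  have ne: "nbhd V E v \<noteq> {}" using w by auto
  have c: "f (S v) / F S \<ge> 0" using F_pos[OF S] f1[OF Om_val[OF S v]] by simp
  have terms: "f (S u) / F S * (if nbhd V E u = {} then g S
      else (\<Sum>w\<in>nbhd V E u. g (S(w := S u))) / real (card (nbhd V E u))) \<ge> 0" if u: "u \<in> V" for u
  proof -
    have "f (S u) / F S \<ge> 0" using F_pos[OF S] f1[OF Om_val[OF S u]] by simp
    moreover have "(\<Sum>w\<in>nbhd V E u. g (S(w := S u))) \<ge> 0" by (rule sum_nonneg) (use g S u in auto)
    moreover have "(if nbhd V E u = {} then g S
      else (\<Sum>w\<in>nbhd V E u. g (S(w := S u))) / real (card (nbhd V E u))) \<ge> 0"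
      using g[OF S] calculation(2) by simp
    ultimately show ?thesis by (intro mult_nonneg_nonneg) auto
  qed
  have "g (S(w := S v)) \<le> (\<Sum>w\<in>nbhd V E v. g (S(w := S v)))"
    by (rule member_le_sum) (use g S v w fin_nb in auto)
  then have "g (S(w := S v)) / real (card (nbhd V E v)) \<le> (\<Sum>w\<in>nbhd V E v. g (S(w := S v))) / real (card (nbhd V E v))"
    by (rule divide_right_mono) simp
  then have "f (S v) / F S * (g (S(w := S v)) / real (card (nbhd V E v)))
      \<le> f (S v) / F S * ((\<Sum>w\<in>nbhd V E v. g (S(w := S v))) / real (card (nbhd V E v)))"
    using c by (rule mult_left_mono)
  also have "\<dots> = f (S v) / F S * (if nbhd V E v = {} then g S
      else (\<Sum>w\<in>nbhd V E v. g (S(w := S v))) / real (card (nbhd V E v)))" using ne by simp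
  also have "\<dots> \<le> Pop g S" unfolding Pop_def
    by (rule member_le_sum[where f = "\<lambda>u. f (S u) / F S * (if nbhd V E u = {} then g S
      else (\<Sum>w\<in>nbhd V E u. g (S(w := S u))) / real (card (nbhd V E u)))"]) (use v terms finV in auto)
  finally show ?thesis by (simp only: times_divide_eq_right)
qed

definition \<delta> where "\<delta> = 1 / (real (card V) * real (card V))"

lemma nV: "card V \<ge> 1" using finV Vne by (simp add: Suc_le_eq card_gt_0_iff)
lemma delta_pos: "\<delta> > 0" using nV by (simp add: \<delta>_def)
lemma delta_le1: "\<delta> \<le> 1"
proof -
  have h: "(1::real) \<le> real (card V)" using nV by simp
  show ?thesis unfolding \<delta>_def using mult_mono[OF h h] by simp
qed

lemma ind_all_le: "S \<in> Om \<Longrightarrow> ind_all S \<le> Q t ind_all S" by (rule Q_sub[OF sub_all])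
lemma ind_none_le: "S \<in> Om \<Longrightarrow> ind_none S \<le> Q t ind_none S" by (rule Q_sub[OF sub_none])

lemma reach:
  "\<forall>S\<in>Om. \<alpha> \<in> S ` V \<longrightarrow> card {v\<in>V. S v \<noteq> \<alpha>} \<le> j \<longrightarrow> Q j ind_all S \<ge> \<delta> ^ j"
proof (induction j)
  case 0
  show ?case
  proof (intro ballI impI)
    fix S assume S: "S \<in> Om" and "card {v\<in>V. S v \<noteq> \<alpha>} \<le> 0"
    then have "{v\<in>V. S v \<noteq> \<alpha>} = {}" using finV by simp
    then have "S = allA" using allA_eq[OF S] by auto
    then show "Q 0 ind_all S \<ge> \<delta> ^ 0" by (simp add: Q_0 ind_all_def)
  qed
next
  case (Suc j)
  show ?case
  proof (intro ballI impI)
    fix S assume S: "S \<in> Om" and al: "\<alpha> \<in> S ` V" and cd: "card {v\<in>V. S v \<noteq> \<alpha>} \<le> Suc j"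
    show "Q (Suc j) ind_all S \<ge> \<delta> ^ Suc j"
    proof (cases "{v\<in>V. S v \<noteq> \<alpha>} = {}")
      case True
      then have "S = allA" using allA_eq[OF S] by auto
      then have "Q (Suc j) ind_all S \<ge> 1" using ind_all_le[OF S, of "Suc j"] by (simp add: ind_all_def)
      moreover have "\<delta> ^ Suc j \<le> 1" by (rule power_le_one) (use delta_pos delta_le1 in auto)
      ultimately show ?thesis by linarith
    next
      case False
      then obtain y where y: "y \<in> V" "S y \<noteq> \<alpha>" by auto
      obtain x where x: "x \<in> V" "S x = \<alpha>" using al by auto
      obtain v w where v: "v \<in> V" and w: "w \<in> nbhd V E v" and Sv: "S v = \<alpha>" and Sw: "S w \<noteq> \<alpha>"
        using path_edge[OF S x y] by blast
      have wV: "w \<in> V" using w by (simp add: nb_mem)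
      define S' where "S' = S(w := S v)"
      have S'Om: "S' \<in> Om" using S v w by (simp add: S'_def)
      have vw: "v \<noteq> w" using Sv Sw by auto
      have al': "\<alpha> \<in> S' ` V" using v vw Sv by (auto simp: S'_def)
      have set': "{u\<in>V. S' u \<noteq> \<alpha>} = {u\<in>V. S u \<noteq> \<alpha>} - {w}" using Sv by (auto simp: S'_def)
      have "card {u\<in>V. S' u \<noteq> \<alpha>} = card {u\<in>V. S u \<noteq> \<alpha>} - 1"
        unfolding set' by (rule card_Diff_singleton) (use wV Sw in auto)
      then have cd': "card {u\<in>V. S' u \<noteq> \<alpha>} \<le> j" using cd by simp
      have IH: "Q j ind_all S' \<ge> \<delta> ^ j" using Suc.IH S'Om al' cd' by blast
      have nn: "\<And>T. T \<in> Om \<Longrightarrow> Q j ind_all T \<ge> 0" by (rule Q_nonneg) (auto simp: ind_all_def)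
      have "Q (Suc j) ind_all S = Pop (Q j ind_all) S" by (simp add: Q_Suc)
      also have "\<dots> \<ge> f (S v) / F S * Q j ind_all S' / real (card (nbhd V E v))"
        unfolding S'_def by (rule Pop_single[OF nn S v w])
      finally have 1: "Q (Suc j) ind_all S \<ge> f \<alpha> / F S / real (card (nbhd V E v)) * Q j ind_all S'"
        using Sv by simp
      have Fp: "F S > 0" using F_pos[OF S] .
      have fa: "f \<alpha> \<ge> 1" using f1 alpha_tau by blast
      have Fle: "F S \<le> real (card V) * f \<alpha>" using F_le[OF S] .
      have dpos: "real (card (nbhd V E v)) \<ge> 1" using card_nb_pos[OF w] by simp
      have dle: "real (card (nbhd V E v)) \<le> real (card V)"
        using card_mono[OF finV nb_sub] by simp
      have c1: "f \<alpha> / F S \<ge> 1 / real (card V)"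
        using Fp Fle nV fa by (simp add: field_simps)
      have c2: "1 / real (card (nbhd V E v)) \<ge> 1 / real (card V)"
        using dpos dle by (simp add: frac_le)
      have "\<delta> = 1 / real (card V) * (1 / real (card V))" by (simp add: \<delta>_def)
      also have "\<dots> \<le> f \<alpha> / F S * (1 / real (card (nbhd V E v)))"
        by (rule mult_mono[OF c1 c2]) (use Fp fa in auto)
      finally have cdel: "\<delta> \<le> f \<alpha> / F S / real (card (nbhd V E v))" by simp
      have "\<delta> ^ Suc j = \<delta> * \<delta> ^ j" by simp
      also have "\<dots> \<le> f \<alpha> / F S / real (card (nbhd V E v)) * Q j ind_all S'"
        by (rule mult_mono[OF cdel IH]) (use Fp fa dpos delta_pos in auto)
      finally show ?thesis using 1 by linarith
    qed
  qed
qed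

end


context moran begin

lemma Q_mixed: "S \<in> Om \<Longrightarrow> Q t mixed S = 1 - Q t ind_all S - Q t ind_none S"
proof -
  assume S: "S \<in> Om"
  have "mixed = (\<lambda>T. (\<lambda>T. 1 - ind_all T) T - ind_none T)" by (rule ext) (simp add: mixed_def)
  then have "Q t mixed S = Q t (\<lambda>T. 1 - ind_all T) S - Q t ind_none S" by (simp add: Q_diff)
  also have "Q t (\<lambda>T. 1 - ind_all T) S = 1 - Q t ind_all S" by (simp add: Q_diff Q_const[OF S])
  finally show ?thesis .
qed

lemma allA_alpha: "\<alpha> \<in> allA ` V" using Vne by (auto simp: allA_def)

lemma ind_all_nn: "ind_all T \<ge> 0" by (simp add: ind_all_def)
lemma ind_none_nn: "ind_none T \<ge> 0" by (simp add: ind_none_def)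

lemma mixed_step:
  assumes R: "R \<in> Om"
  shows "Q (card V) mixed R \<le> (1 - \<delta> ^ card V) * mixed R"
proof -
  have qa: "Q (card V) ind_all R \<ge> 0" by (rule Q_nonneg[OF ind_all_nn R])
  have qb: "Q (card V) ind_none R \<ge> 0" by (rule Q_nonneg[OF ind_none_nn R])
  show ?thesis
  proof (cases "R = allA")
    case True
    have "Q (card V) ind_all R \<ge> 1" using ind_all_le[OF R, of "card V"] True by (simp add: ind_all_def)
    moreover have "mixed R = 0" using True allA_alpha by (simp add: mixed_def ind_all_def ind_none_def)
    ultimately show ?thesis using Q_mixed[OF R] qb by simp
  next
    case False
    show ?thesis
    proof (cases "\<alpha> \<in> R ` V")
      case True
      have "card {v\<in>V. R v \<noteq> \<alpha>} \<le> card V" by (rule card_mono[OF finV]) auto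
      then have "Q (card V) ind_all R \<ge> \<delta> ^ card V" using reach R True by blast
      moreover have "mixed R = 1" using True False by (simp add: mixed_def ind_all_def ind_none_def)
      ultimately show ?thesis using Q_mixed[OF R] qb by simp
    next
      case nal: False
      have "Q (card V) ind_none R \<ge> 1" using ind_none_le[OF R, of "card V"] nal by (simp add: ind_none_def)
      moreover have "mixed R = 0" using nal False by (simp add: mixed_def ind_all_def ind_none_def)
      ultimately show ?thesis using Q_mixed[OF R] qa by simp
    qed
  qed
qed

lemma mixed_decay: "S \<in> Om \<Longrightarrow> Q (k * card V) mixed S \<le> (1 - \<delta> ^ card V) ^ k"
proof (induction k arbitrary: S)
  case 0
  then show ?case by (simp add: Q_0 mixed_def ind_all_def ind_none_def)
next
  case (Suc k)
  have c: "1 - \<delta> ^ card V \<ge> 0"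
    using power_le_one[of \<delta> "card V"] delta_pos delta_le1 by simp
  have "Q (Suc k * card V) mixed S = Q (k * card V) (Q (card V) mixed) S"
    by (simp add: Q_add[symmetric] add.commute)
  also have "\<dots> \<le> Q (k * card V) (\<lambda>T. (1 - \<delta> ^ card V) * mixed T) S"
    by (rule Q_mono) (use mixed_step Suc.prems in auto)
  also have "\<dots> = (1 - \<delta> ^ card V) * Q (k * card V) mixed S" by (rule Q_cmult)
  also have "\<dots> \<le> (1 - \<delta> ^ card V) * (1 - \<delta> ^ card V) ^ k"
    by (rule mult_left_mono[OF Suc.IH[OF Suc.prems] c])
  finally show ?case by simp
qed

lemma Phi_le: "T \<in> Om \<Longrightarrow> Phi T \<le> Z * (1 - ind_none T)"
proof (cases "\<alpha> \<in> T ` V")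
  case True
  have "Phi T \<le> Z" unfolding Phi_def Z_def by (rule sum_mono) (use wt_pos in \<open>auto simp: less_imp_le\<close>)
  then show ?thesis using True by (simp add: ind_none_def)
next
  case False
  have "Phi T = 0" unfolding Phi_def using False by (auto intro!: sum.neutral)
  then show ?thesis using False by (simp add: ind_none_def)
qed

lemma fix_bound:
  assumes S0: "S0 \<in> Om"
  shows "Phi S0 / Z \<le> fix_prob V E \<tau> f \<alpha> S0"
proof -
  define X where "X t = Q t ind_all S0" for t
  have pt: "moran_pt V E \<tau> f t S0 allA = X t" for t
  proof -
    have "(\<Sum>S\<in>Om. moran_pt V E \<tau> f t S0 S * ind_all S) = moran_pt V E \<tau> f t S0 allA"
    proof -
      have "(\<lambda>S. moran_pt V E \<tau> f t S0 S * ind_all S) = (\<lambda>S. if S = allA then moran_pt V E \<tau> f t S0 allA else 0)"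
        by (auto simp: ind_all_def)
      then show ?thesis using finOm allA_Om by (simp only:) (simp add: sum.delta)
    qed
    then show ?thesis using pt_Q[OF S0] by (simp add: X_def)
  qed
  have inc: "incseq X" unfolding X_def by (rule Q_incr[OF sub_all S0])
  have bnd: "\<forall>i. X i \<le> 1"
  proof
    fix i
    have "Q i ind_all S0 \<le> Q i (\<lambda>_. 1) S0" by (rule Q_mono) (auto simp: ind_all_def S0)
    then show "X i \<le> 1" using Q_const[OF S0] by (simp add: X_def)
  qed
  obtain L where L: "X \<longlonglongrightarrow> L" "\<forall>i. X i \<le> L" using incseq_convergent[OF inc bnd] by blast
  have fixL: "fix_prob V E \<tau> f \<alpha> S0 = L"
    unfolding fix_prob_def allA_def[symmetric] pt using L(1) by (rule limI)
  have q: "norm (1 - \<delta> ^ card V) < 1"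
    using delta_pos delta_le1 power_le_one[of \<delta> "card V"] zero_less_power[OF delta_pos, of "card V"] by simp
  have lim0: "(\<lambda>k. (1 - \<delta> ^ card V) ^ k) \<longlonglongrightarrow> 0" by (rule LIMSEQ_power_zero[OF q])
  show ?thesis
  proof (rule field_le_epsilon)
    fix e :: real assume e: "e > 0"
    from lim0 e have "\<exists>k. \<bar>(1 - \<delta> ^ card V) ^ k\<bar> < e"
      by (metis LIMSEQ_D le_refl real_norm_def diff_zero)
    then obtain k where k: "(1 - \<delta> ^ card V) ^ k < e" by (meson abs_less_iff)
    define t where "t = k * card V"
    have m: "Q t mixed S0 \<le> e" using mixed_decay[OF S0, of k] k by (simp add: t_def)
    have "Phi S0 \<le> Q t Phi S0" by (rule Q_sub[OF sub_Phi S0])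
    also have "\<dots> \<le> Q t (\<lambda>T. Z * (1 - ind_none T)) S0" by (rule Q_mono[OF Phi_le S0])
    also have "\<dots> = Z * (1 - Q t ind_none S0)" by (simp add: Q_cmult Q_diff Q_const[OF S0])
    also have "\<dots> = Z * (X t + Q t mixed S0)" using Q_mixed[OF S0, of t] by (simp add: X_def)
    also have "\<dots> \<le> Z * (L + e)" using L(2) m Z_pos by (intro mult_left_mono add_mono) auto
    finally have "Phi S0 \<le> Z * (L + e)" .
    then show "Phi S0 / Z \<le> fix_prob V E \<tau> f \<alpha> S0 + e" using Z_pos fixL by (simp add: field_simps)
  qed
qed

end



lemma fin_dtuples: "finite A \<Longrightarrow> finite (dtuples A k)"
  unfolding dtuples_def
  by (rule finite_subset[OF _ finite_lists_length_eq[of A k]]) auto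

lemma dtuples_nth: "u \<in> dtuples A k \<Longrightarrow> i < k \<Longrightarrow> u ! i \<in> A"
  unfolding dtuples_def by auto

lemma count_const:
  assumes i: "i < k" and v: "v \<in> A" and v': "v' \<in> A"
  shows "card {u \<in> dtuples A k. u ! i = v} = card {u \<in> dtuples A k. u ! i = v'}"
proof -
  define sw where "sw x = (if x = v then v' else if x = v' then v else x)" for x
  have swsw: "sw (sw x) = x" for x by (simp add: sw_def)
  have injsw: "inj sw" by (metis injI swsw)
  have swA: "x \<in> A \<Longrightarrow> sw x \<in> A" for x using v v' by (simp add: sw_def)
  have mapd: "map sw u \<in> dtuples A k" if u: "u \<in> dtuples A k" for u
  proof -
    have "length u = k" "distinct u" "set u \<subseteq> A" using u by (auto simp: dtuples_def)
    moreover have "inj_on sw (set u)" using injsw by (rule inj_on_subset) simp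
    ultimately show ?thesis using swA unfolding dtuples_def by (auto simp: distinct_map)
  qed
  have mm: "map sw (map sw u) = u" for u by (simp add: swsw map_idI)
  have swv: "sw v = v'" and swv': "sw v' = v" by (auto simp: sw_def)
  have nthm: "map sw u ! i = sw (u ! i)" if "u \<in> dtuples A k" for u
    using that i by (simp add: dtuples_def)
  show ?thesis
  proof (rule bij_betw_same_card[of "map sw"], rule bij_betw_byWitness[where f' = "map sw"])
    show "\<forall>a\<in>{u \<in> dtuples A k. u ! i = v}. map sw (map sw a) = a" using mm by blast
    show "\<forall>a'\<in>{u \<in> dtuples A k. u ! i = v'}. map sw (map sw a') = a'" using mm by blast
    show "map sw ` {u \<in> dtuples A k. u ! i = v} \<subseteq> {u \<in> dtuples A k. u ! i = v'}"
    proof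
      fix x assume "x \<in> map sw ` {u \<in> dtuples A k. u ! i = v}"
      then obtain u where "u \<in> dtuples A k" "u ! i = v" "x = map sw u" by blast
      then show "x \<in> {u \<in> dtuples A k. u ! i = v'}" using mapd nthm swv by simp
    qed
    show "map sw ` {u \<in> dtuples A k. u ! i = v'} \<subseteq> {u \<in> dtuples A k. u ! i = v}"
    proof
      fix x assume "x \<in> map sw ` {u \<in> dtuples A k. u ! i = v'}"
      then obtain u where "u \<in> dtuples A k" "u ! i = v'" "x = map sw u" by blast
      then show "x \<in> {u \<in> dtuples A k. u ! i = v}" using mapd nthm swv' by simp
    qed
  qed
qed

lemma sum_nth:
  assumes fin: "finite A" and ne: "A \<noteq> {}" and i: "i < k"
  shows "(\<Sum>u\<in>dtuples A k. g (u ! i)) = real (card (dtuples A k)) / real (card A) * (\<Sum>v\<in>A. g v :: real)"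
proof -
  obtain v0 where v0: "v0 \<in> A" using ne by auto
  define c where "c = real (card {u \<in> dtuples A k. u ! i = v0})"
  have cv: "real (card {u \<in> dtuples A k. u ! i = v}) = c" if "v \<in> A" for v
    using count_const[OF i that v0] by (simp add: c_def)
  have img: "(\<lambda>u. u ! i) ` dtuples A k \<subseteq> A" using dtuples_nth i by blast
  have "(\<Sum>u\<in>dtuples A k. g (u ! i)) = (\<Sum>v\<in>A. \<Sum>u\<in>{u \<in> dtuples A k. u ! i = v}. g (u ! i))"
    by (rule sum.group[symmetric, OF fin_dtuples[OF fin] fin img])
  also have "\<dots> = (\<Sum>v\<in>A. c * g v)"
    by (rule sum.cong[OF refl]) (simp add: cv)
  finally have 1: "(\<Sum>u\<in>dtuples A k. g (u ! i)) = c * (\<Sum>v\<in>A. g v)" by (simp add: sum_distrib_left)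
  have "real (card (dtuples A k)) = (\<Sum>u\<in>dtuples A k. (1::real))" by simp
  also have "\<dots> = (\<Sum>v\<in>A. \<Sum>u\<in>{u \<in> dtuples A k. u ! i = v}. (1::real))"
    by (rule sum.group[symmetric, OF fin_dtuples[OF fin] fin img])
  also have "\<dots> = (\<Sum>v\<in>A. c)" by (rule sum.cong[OF refl]) (simp add: cv)
  finally have 2: "real (card (dtuples A k)) = real (card A) * c" by simp
  have "card A > 0" using fin ne by (simp add: card_gt_0_iff)
  then show ?thesis using 1 2 by simp
qed

lemma alpha_in_tuple:
  assumes "finite T" "\<gamma> \<in> dtuples T (card T)" "a \<in> T"
  shows "\<exists>i < card T. \<gamma> ! i = a"
proof -
  have "set \<gamma> \<subseteq> T" "card (set \<gamma>) = card T" using assms(2) by (auto simp: dtuples_def distinct_card)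
  then have "set \<gamma> = T" using assms(1) by (simp add: card_subset_eq)
  then show ?thesis using assms(2,3) by (auto simp: dtuples_def in_set_conv_nth)
qed



context moran begin

lemma Phi_ge: "M \<in> Om \<Longrightarrow> x \<in> V \<Longrightarrow> M x = \<alpha> \<Longrightarrow> wt x \<le> Phi M"
proof -
  assume M: "M \<in> Om" and x: "x \<in> V" and Mx: "M x = \<alpha>"
  have "(if M x = \<alpha> then wt x else 0) \<le> (\<Sum>v\<in>V. if M v = \<alpha> then wt v else 0)"
    by (rule member_le_sum) (use x finV wt_pos in \<open>auto simp: less_imp_le\<close>)
  then show ?thesis using Mx by (simp add: Phi_def)
qed

lemma dist_bound:
  assumes D: "D \<in> init_dists V \<tau>"
  shows "fix_prob_dist V E \<tau> f \<alpha> D \<ge> 1 / real (card V)"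
proof -
  define k where "k = card \<tau>"
  define dV where "dV = dtuples V k"
  define dT where "dT = dtuples \<tau> k"
  obtain Df where hDf: "\<forall>u\<in>dV. \<forall>\<gamma>\<in>dT. set_pmf (Df u \<gamma>) \<subseteq> states_fixed V \<tau> u \<gamma>"
    and pmfD: "\<forall>S. pmf D S = (1 / real (card (dV \<times> dT))) * (\<Sum>(u, \<gamma>)\<in>dV \<times> dT. pmf (Df u \<gamma>) S)"
    using D unfolding init_dists_def dV_def dT_def k_def by blast
  define N where "N = real (card (dV \<times> dT))"
  have finV': "finite dV" "finite dT" unfolding dV_def dT_def using fin_dtuples finV fin_tau by auto
  have Npos: "N > 0"
  proof (rule ccontr)
    assume "\<not> N > 0"
    then have "N = 0" by (simp add: N_def)
    then have "\<forall>S. pmf D S = 0" using pmfD by (simp add: N_def)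
    moreover obtain x where "x \<in> set_pmf D" using set_pmf_not_empty[of D] by blast
    ultimately show False by (simp add: set_pmf_iff)
  qed
  have Ncard: "N = real (card dV) * real (card dT)" by (simp add: N_def card_cartesian_product)
  define idx where "idx \<gamma> = (SOME i. i < k \<and> \<gamma> ! i = \<alpha>)" for \<gamma>
  have idx: "idx \<gamma> < k \<and> \<gamma> ! idx \<gamma> = \<alpha>" if "\<gamma> \<in> dT" for \<gamma>
  proof -
    have "\<exists>i < k. \<gamma> ! i = \<alpha>" using alpha_in_tuple[OF fin_tau _ alpha_tau] that by (simp add: dT_def k_def)
    then show ?thesis unfolding idx_def using someI_ex[of "\<lambda>i. i < k \<and> \<gamma> ! i = \<alpha>"] by blast
  qed
  have per: "(\<Sum>M\<in>Om. pmf (Df u \<gamma>) M * Phi M) \<ge> wt (u ! idx \<gamma>)" if u: "u \<in> dV" and g: "\<gamma> \<in> dT" for u \<gamma>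
  proof -
    let ?x = "u ! idx \<gamma>"
    have xV: "?x \<in> V" using dtuples_nth[of u V k "idx \<gamma>"] u idx[OF g] by (auto simp: dV_def)
    have sub: "set_pmf (Df u \<gamma>) \<subseteq> Om" using hDf u g by (auto simp: states_fixed_def)
    have "wt ?x = (\<Sum>M\<in>Om. pmf (Df u \<gamma>) M) * wt ?x" using sum_pmf_eq_1[OF finOm sub] by simp
    also have "\<dots> = (\<Sum>M\<in>Om. pmf (Df u \<gamma>) M * wt ?x)" by (simp add: sum_distrib_right)
    also have "\<dots> \<le> (\<Sum>M\<in>Om. pmf (Df u \<gamma>) M * Phi M)"
    proof (rule sum_mono)
      fix M assume M: "M \<in> Om"
      show "pmf (Df u \<gamma>) M * wt ?x \<le> pmf (Df u \<gamma>) M * Phi M"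
      proof (cases "M \<in> set_pmf (Df u \<gamma>)")
        case True
        then have "M \<in> states_fixed V \<tau> u \<gamma>" using hDf u g by blast
        moreover have "idx \<gamma> < length u" using u idx[OF g] by (simp add: dV_def dtuples_def)
        ultimately have "M ?x = \<alpha>" using idx[OF g] by (auto simp: states_fixed_def)
        then have "wt ?x \<le> Phi M" using Phi_ge M xV by blast
        then show ?thesis by (rule mult_left_mono) simp
      next
        case False then show ?thesis by (simp add: set_pmf_iff)
      qed
    qed
    finally show ?thesis .
  qed
  have sumT: "(\<Sum>p\<in>dV \<times> dT. wt (fst p ! idx (snd p))) = real (card dV) * real (card dT) / real (card V) * Z"
  proof -
    have "(\<Sum>p\<in>dV \<times> dT. wt (fst p ! idx (snd p))) = (\<Sum>u\<in>dV. \<Sum>\<gamma>\<in>dT. wt (u ! idx \<gamma>))"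
      by (simp add: sum.cartesian_product case_prod_unfold)
    also have "\<dots> = (\<Sum>\<gamma>\<in>dT. \<Sum>u\<in>dV. wt (u ! idx \<gamma>))" by (rule sum.swap)
    also have "\<dots> = (\<Sum>\<gamma>\<in>dT. real (card dV) / real (card V) * Z)"
      by (rule sum.cong[OF refl]) (use idx in \<open>simp add: dV_def Z_def sum_nth[OF finV Vne]\<close>)
    finally show ?thesis by simp
  qed
  have "(\<Sum>M\<in>Om. pmf D M * Phi M) = (\<Sum>M\<in>Om. 1 / N * (\<Sum>p\<in>dV \<times> dT. pmf (Df (fst p) (snd p)) M * Phi M))"
    by (rule sum.cong[OF refl]) (simp add: pmfD N_def sum_distrib_right case_prod_unfold)
  also have "\<dots> = 1 / N * (\<Sum>p\<in>dV \<times> dT. \<Sum>M\<in>Om. pmf (Df (fst p) (snd p)) M * Phi M)"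
    by (simp only: sum_distrib_left[symmetric]) (rule arg_cong[where f = "\<lambda>x. 1 / N * x"], rule sum.swap)
  also have "\<dots> \<ge> 1 / N * (\<Sum>p\<in>dV \<times> dT. wt (fst p ! idx (snd p)))"
    by (intro mult_left_mono sum_mono) (use per Npos in auto)
  finally have 0: "(\<Sum>M\<in>Om. pmf D M * Phi M) \<ge> 1 / N * (real (card dV) * real (card dT) / real (card V) * Z)"
    unfolding sumT .
  have nz: "real (card dV) * real (card dT) \<noteq> 0" using Npos Ncard by linarith
  have "1 / N * (real (card dV) * real (card dT) / real (card V) * Z) = Z / real (card V)"
    unfolding Ncard using nz by (simp add: field_simps)
  then have 1: "(\<Sum>M\<in>Om. pmf D M * Phi M) \<ge> Z / real (card V)" using 0 by simp
  have "fix_prob_dist V E \<tau> f \<alpha> D \<ge> (\<Sum>M\<in>Om. pmf D M * (Phi M / Z))"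
    unfolding fix_prob_dist_def by (rule sum_mono, rule mult_left_mono) (use fix_bound in auto)
  moreover have "(\<Sum>M\<in>Om. pmf D M * (Phi M / Z)) = (\<Sum>M\<in>Om. pmf D M * Phi M) / Z"
    by (simp add: sum_divide_distrib)
  moreover have "(\<Sum>M\<in>Om. pmf D M * Phi M) / Z \<ge> 1 / real (card V)"
    using 1 Z_pos nV by (simp add: field_simps)
  ultimately show ?thesis by linarith
qed

end

theorem corollary9:
  fixes V :: "'v set" and E :: "'v \<Rightarrow> 'v \<Rightarrow> bool"
    and \<tau> :: "'t set" and f :: "'t \<Rightarrow> real" and \<alpha> :: 't and D :: "('v \<Rightarrow> 't) pmf"
  assumes "connected_graph V E"
    and "finite \<tau>"
    and "\<forall>i\<in>\<tau>. f i \<in> \<rat> \<and> f i \<ge> 1"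
    and "\<alpha> \<in> fittest \<tau> f"
    and "D \<in> init_dists V \<tau>"
  shows "fix_prob_dist V E \<tau> f \<alpha> D \<ge> 1 / real (card V)"
proof -
  interpret moran V E \<tau> f \<alpha>
    using assms by unfold_locales auto
  show ?thesis by (rule dist_bound[OF assms(5)])
qed


end
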